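(* Let $(\Omega,\mathcal F,\mathbb P)$ be a probability space carrying a group of measurable bijections $\{\theta_n\}_{n\in\mathbb Z}$ each preserving $\mathbb P$, and let $\{a_n\}_{n\in\mathbb Z}$ be i.i.d. flow-compatible random variables with values in $\{1,2,\dots\}$, with $\mathbb E[a_0]<\infty$ and $\mathbb P[a_0=1]>0$. Let $f(n)=n+a_n$, let $\Phi^s$ be the set of successful integers and $\Phi^e$ the set of ephemeral integers. Then the intensity of $\Phi^s$ is $$\lambda^s=\mathbb P[0\in\Phi^s]=\frac{1}{\mathbb E[a_0]},$$ and the intensity of $\Phi^e$ is $\lambda^e=\mathbb P[0\in\Phi^e]=1-\frac{1}{\mathbb E[a_0]}$.
   Context: For $n\in\mathbb Z$, the set of descendants of $n$ is $D(n)=\{m\in\mathbb Z:\exists\, j\ge 0,\ f^j(m)=n\}$, where $f^j$ is the $j$-th iterate of $f$. An integer $n$ is successful if $D(n)$ is infinite and ephemeral if $D(n)$ is finite; $\Phi^s$ and $\Phi^e$ are the corresponding random subsets of $\mathbb Z$ (they are stationary point processes, being flow-compatible). *)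

theory Defs
  imports "HOL-Probability.Probability"
begin

text \<open>The map f(n) = n + a_n for a fixed sample point (a is the realised sequence).\<close>
definition succ_map :: "(int \<Rightarrow> nat) \<Rightarrow> int \<Rightarrow> int" where
  "succ_map a n = n + int (a n)"

definition descendants :: "(int \<Rightarrow> int) \<Rightarrow> int \<Rightarrow> int set" where
  "descendants f n = {m. \<exists>j. (f ^^ j) m = n}"

definition successful :: "(int \<Rightarrow> int) \<Rightarrow> int \<Rightarrow> bool" where
  "successful f n \<longleftrightarrow> infinite (descendants f n)"

definition ephemeral :: "(int \<Rightarrow> int) \<Rightarrow> int \<Rightarrow> bool" where
  "ephemeral f n \<longleftrightarrow> finite (descendants f n)"

end

theory Submission
  imports Defs
begin


lemma succ_map_gt: "(\<And>n. A n \<ge> 1) \<Longrightarrow> succ_map A n > n"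
proof -
  assume "\<And>n. A n \<ge> 1"
  then have "A n \<ge> 1" .
  then show ?thesis by (simp add: succ_map_def)
qed

lemma iter_ge:
  assumes "\<And>n. A n \<ge> 1"
  shows "(succ_map A ^^ j) m \<ge> m + int j"
proof (induction j)
  case (Suc j)
  have "(succ_map A ^^ Suc j) m = succ_map A ((succ_map A ^^ j) m)" by simp
  also have "\<dots> > (succ_map A ^^ j) m" using succ_map_gt[OF assms] .
  finally show ?case using Suc by simp
qed simp

lemma iter_strict:
  assumes "\<And>n. A n \<ge> 1" and "i < j"
  shows "(succ_map A ^^ i) m < (succ_map A ^^ j) m"
proof -
  obtain d where j: "j = Suc d + i" proof -
    obtain k where "j = Suc (i + k)" using less_imp_Suc_add[OF assms(2)] by blast
    then show ?thesis using that[of k] by simp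
  qed
  have "(succ_map A ^^ j) m = (succ_map A ^^ Suc d) ((succ_map A ^^ i) m)"
    by (simp only: j funpow_add comp_apply)
  also have "\<dots> \<ge> (succ_map A ^^ i) m + int (Suc d)" by (rule iter_ge[OF assms(1)])
  finally show ?thesis by simp
qed

lemma iter_le_mono:
  assumes "\<And>n. A n \<ge> 1" and "i \<le> j"
  shows "(succ_map A ^^ i) m \<le> (succ_map A ^^ j) m"
proof (cases "i = j")
  case False
  then show ?thesis using iter_strict[where A=A and i=i and j=j and m=m, OF assms(1)] assms(2) by simp
qed simp

lemma desc_le:
  assumes "\<And>n. A n \<ge> 1" "m \<in> descendants (succ_map A) n"
  shows "m \<le> n"
proof -
  obtain j where "(succ_map A ^^ j) m = n" using assms(2) unfolding descendants_def by auto
  moreover have "(succ_map A ^^ j) m \<ge> m + int j" by (rule iter_ge[OF assms(1)])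
  ultimately show ?thesis by linarith
qed

lemma self_desc: "n \<in> descendants f n"
  unfolding descendants_def by (auto intro: exI[of _ 0])

lemma desc_sub: "descendants f n \<subseteq> descendants f (f n)"
proof
  fix m assume "m \<in> descendants f n"
  then obtain j where "(f ^^ j) m = n" unfolding descendants_def by auto
  then have "(f ^^ Suc j) m = f n" by simp
  then show "m \<in> descendants f (f n)" unfolding descendants_def by blast
qed

lemma succ_step: "successful f n \<Longrightarrow> successful f (f n)"
  unfolding successful_def using desc_sub finite_subset by blast

lemma succ_iter: "successful f n \<Longrightarrow> successful f ((f ^^ i) n)"
  by (induction i) (auto intro: succ_step)

lemma successful_iff_unbounded:
  assumes "\<And>n. A n \<ge> 1"
  shows "successful (succ_map A) n \<longleftrightarrow> (\<forall>K::nat. \<exists>m::int. m \<le> n - int K \<and> (\<exists>j. (succ_map A ^^ j) m = n))"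
proof -
  let ?D = "descendants (succ_map A) n"
  have le: "?D \<subseteq> {..n}" using desc_le[OF assms] by auto
  show ?thesis
  proof
    assume s: "successful (succ_map A) n"
    show "\<forall>K::nat. \<exists>m::int. m \<le> n - int K \<and> (\<exists>j. (succ_map A ^^ j) m = n)"
    proof
      fix K :: nat
      show "\<exists>m::int. m \<le> n - int K \<and> (\<exists>j. (succ_map A ^^ j) m = n)"
      proof (rule ccontr)
        assume "\<not> ?thesis"
        have "?D \<subseteq> {n - int K..n}"
        proof
          fix m assume mD: "m \<in> ?D"
          then have "m \<le> n" using le by auto
          moreover have "\<not> m \<le> n - int K" using mD \<open>\<not> _\<close> unfolding descendants_def by blast
          ultimately show "m \<in> {n - int K..n}" by simp
        qed
        then have "finite ?D" using finite_subset by blast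
        then show False using s unfolding successful_def by simp
      qed
    qed
  next
    assume u: "\<forall>K::nat. \<exists>m::int. m \<le> n - int K \<and> (\<exists>j. (succ_map A ^^ j) m = n)"
    show "successful (succ_map A) n"
      unfolding successful_def
    proof
      assume fin: "finite ?D"
      have "?D \<noteq> {}" using self_desc by blast
      then have mn: "Min ?D \<in> ?D" using fin by simp
      obtain m where m: "m \<le> n - int (nat (n - Min ?D + 1))" "\<exists>j. (succ_map A ^^ j) m = n"
        using u by blast
      then have "m \<in> ?D" unfolding descendants_def by auto
      then have "Min ?D \<le> m" using fin by simp
      moreover have "Min ?D \<le> n" using mn le by auto
      moreover have "int (nat (n - Min ?D + 1)) = n - Min ?D + 1" using \<open>Min ?D \<le> n\<close> by simp
      ultimately show False using m(1) by linarith
    qed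
  qed
qed

lemma shift_iter: "(succ_map (\<lambda>m. A (m + k)) ^^ j) m = (succ_map A ^^ j) (m + k) - k"
  by (induction j) (simp_all add: succ_map_def)

lemma shift_desc:
  "descendants (succ_map A) (n + k) = (\<lambda>x. x + k) ` descendants (succ_map (\<lambda>m. A (m + k))) n"
proof -
  have "descendants (succ_map (\<lambda>m. A (m + k))) n = (\<lambda>x. x - k) ` descendants (succ_map A) (n + k)"
  proof (intro equalityI subsetI)
    fix x assume "x \<in> descendants (succ_map (\<lambda>m. A (m + k))) n"
    then obtain j where "(succ_map A ^^ j) (x + k) - k = n" unfolding descendants_def shift_iter by auto
    then have "x + k \<in> descendants (succ_map A) (n + k)" unfolding descendants_def by auto
    then show "x \<in> (\<lambda>x. x - k) ` descendants (succ_map A) (n + k)" by (intro image_eqI[of _ _ "x + k"]) auto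
  next
    fix x assume "x \<in> (\<lambda>x. x - k) ` descendants (succ_map A) (n + k)"
    then obtain y where y: "x = y - k" "y \<in> descendants (succ_map A) (n + k)" by auto
    then obtain j where "(succ_map A ^^ j) y = n + k" unfolding descendants_def by auto
    then show "x \<in> descendants (succ_map (\<lambda>m. A (m + k))) n" unfolding descendants_def shift_iter y(1)
      by (intro CollectI exI[of _ j]) simp
  qed
  then show ?thesis by (simp add: image_image)
qed

lemma shift_successful:
  "successful (succ_map (\<lambda>m. A (m + k))) n \<longleftrightarrow> successful (succ_map A) (n + k)"
  unfolding successful_def shift_desc by (simp add: finite_image_iff inj_on_def)

lemma local_desc_sub:
  assumes pos: "\<And>n. A n \<ge> 1" and eq: "\<And>m. m < n \<Longrightarrow> A m = B m"
  shows "descendants (succ_map A) n \<subseteq> descendants (succ_map B) n"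
proof
  fix m assume "m \<in> descendants (succ_map A) n"
  then obtain j where j: "(succ_map A ^^ j) m = n" unfolding descendants_def by auto
  have "i \<le> j \<Longrightarrow> (succ_map B ^^ i) m = (succ_map A ^^ i) m" for i
  proof (induction i)
    case (Suc i)
    then have "i < j" by simp
    then have lt: "(succ_map A ^^ i) m < n" using iter_strict[where A=A and i=i and j=j and m=m, OF pos] j by simp
    have "(succ_map B ^^ Suc i) m = succ_map B ((succ_map A ^^ i) m)" using Suc by simp
    also have "\<dots> = succ_map A ((succ_map A ^^ i) m)" using eq[OF lt] by (simp add: succ_map_def)
    finally show ?case by simp
  qed simp
  then have "(succ_map B ^^ j) m = n" using j by simp
  then show "m \<in> descendants (succ_map B) n" unfolding descendants_def by auto
qed

lemma local_successful:
  assumes "\<And>n. A n \<ge> 1" "\<And>n. B n \<ge> 1" and eq: "\<And>m. m < n \<Longrightarrow> A m = B m"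
  shows "successful (succ_map A) n \<longleftrightarrow> successful (succ_map B) n"
proof -
  have "descendants (succ_map A) n = descendants (succ_map B) n"
  proof (rule subset_antisym)
    show "descendants (succ_map A) n \<subseteq> descendants (succ_map B) n"
      by (rule local_desc_sub[where A=A and B=B and n=n, OF assms(1) eq])
    show "descendants (succ_map B) n \<subseteq> descendants (succ_map A) n"
      by (rule local_desc_sub[where A=B and B=A and n=n, OF assms(2)]) (simp add: eq)
  qed
  then show ?thesis unfolding successful_def by simp
qed

definition cover :: "(int \<Rightarrow> nat) \<Rightarrow> int \<Rightarrow> int set" where
  "cover A k = {n. n \<le> k \<and> k < succ_map A n}"

lemma cover_hit:
  assumes pos: "\<And>n. A n \<ge> 1" and "m \<le> k"
  shows "\<exists>j. (succ_map A ^^ j) m \<in> cover A k"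
proof -
  let ?f = "succ_map A"
  have "(?f ^^ nat (k - m + 1)) m \<ge> m + int (nat (k - m + 1))"
    using iter_ge[where A=A and j="nat (k - m + 1)" and m=m, OF pos] .
  then have ex: "\<exists>j. k < (?f ^^ j) m" using assms(2) by (intro exI[of _ "nat (k - m + 1)"]) simp
  define j where "j = (LEAST j. k < (?f ^^ j) m)"
  have j1: "k < (?f ^^ j) m" unfolding j_def using LeastI_ex[OF ex] .
  have "j \<noteq> 0" proof assume "j = 0" then show False using j1 assms(2) by simp qed
  then obtain i where i: "j = Suc i" by (cases j) auto
  have "\<not> k < (?f ^^ i) m" using not_less_Least[of i "\<lambda>j. k < (?f ^^ j) m"] unfolding j_def[symmetric] i by simp
  then have "(?f ^^ i) m \<in> cover A k" using j1 unfolding cover_def i by simp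
  then show ?thesis by blast
qed

lemma cover_exists:
  assumes pos: "\<And>n. A n \<ge> 1" and fin: "finite (cover A k)"
  shows "\<exists>n\<in>cover A k. successful (succ_map A) n"
proof (rule ccontr)
  assume "\<not> ?thesis"
  then have finD: "\<And>n. n \<in> cover A k \<Longrightarrow> finite (descendants (succ_map A) n)"
    unfolding successful_def by blast
  have "{..k} \<subseteq> (\<Union>n\<in>cover A k. descendants (succ_map A) n)"
  proof
    fix m assume "m \<in> {..k}"
    then obtain j where "(succ_map A ^^ j) m \<in> cover A k" using cover_hit[where A=A, OF pos] by auto
    then show "m \<in> (\<Union>n\<in>cover A k. descendants (succ_map A) n)" unfolding descendants_def by blast
  qed
  moreover have "finite (\<Union>n\<in>cover A k. descendants (succ_map A) n)" using fin finD by blast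
  ultimately have "finite {..k}" by (rule finite_subset)
  then show False by (simp add: infinite_Iic)
qed

lemma preimage_cover:
  assumes pos: "\<And>n. A n \<ge> 1" and "succ_map A u = k + 1"
  shows "u \<in> cover A k"
  using assms succ_map_gt[where A=A, OF pos, of u] unfolding cover_def by simp

lemma successful_preimage:
  assumes pos: "\<And>n. A n \<ge> 1" and fin: "finite (cover A k)" and s: "successful (succ_map A) (k + 1)"
  shows "\<exists>u. succ_map A u = k + 1 \<and> successful (succ_map A) u"
proof (rule ccontr)
  let ?f = "succ_map A"
  assume "\<not> ?thesis"
  then have finD: "\<And>u. ?f u = k + 1 \<Longrightarrow> finite (descendants ?f u)" unfolding successful_def by blast
  have "descendants ?f (k+1) \<subseteq> insert (k+1) (\<Union>u\<in>{u\<in>cover A k. ?f u = k + 1}. descendants ?f u)"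
  proof
    fix m assume "m \<in> descendants ?f (k+1)"
    then obtain j where j: "(?f ^^ j) m = k + 1" unfolding descendants_def by auto
    show "m \<in> insert (k+1) (\<Union>u\<in>{u\<in>cover A k. ?f u = k + 1}. descendants ?f u)"
    proof (cases j)
      case 0 then show ?thesis using j by simp
    next
      case (Suc i)
      then have "?f ((?f ^^ i) m) = k + 1" using j by simp
      moreover then have "(?f ^^ i) m \<in> cover A k" using preimage_cover[where A=A, OF pos] by blast
      moreover have "m \<in> descendants ?f ((?f ^^ i) m)" unfolding descendants_def by blast
      ultimately show ?thesis by blast
    qed
  qed
  moreover have "finite (insert (k+1) (\<Union>u\<in>{u\<in>cover A k. ?f u = k + 1}. descendants ?f u))"
    using fin finD by auto
  ultimately show False using s unfolding successful_def using finite_subset by blast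
qed

lemma merge:
  assumes pos: "\<And>n. A n \<ge> 1"
    and uv: "u \<noteq> v" "u \<in> cover A k" "v \<in> cover A k"
    and su: "successful (succ_map A) u" and sv: "successful (succ_map A) v"
    and meet: "(succ_map A ^^ i) u = (succ_map A ^^ j) v"
  shows "\<exists>u' v'. u' \<noteq> v' \<and> successful (succ_map A) u' \<and> successful (succ_map A) v'
           \<and> succ_map A u' = succ_map A v'"
proof -
  let ?f = "succ_map A"
  let ?P = "\<lambda>i. \<exists>j. (?f ^^ i) u = (?f ^^ j) v"
  define i0 where "i0 = (LEAST i. ?P i)"
  have "?P i0" unfolding i0_def using LeastI[of ?P i] meet by blast
  then obtain j0 where ij: "(?f ^^ i0) u = (?f ^^ j0) v" by blast
  have big: "x \<in> cover A k \<Longrightarrow> 0 < n \<Longrightarrow> (?f ^^ n) x > k" for x n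
  proof -
    assume x: "x \<in> cover A k" and n: "0 < n"
    have "(?f ^^ n) x \<ge> (?f ^^ 1) x" using iter_le_mono[where A=A and i=1 and j=n and m=x, OF pos] n by simp
    then show ?thesis using x unfolding cover_def by simp
  qed
  have i0: "i0 \<noteq> 0"
  proof
    assume "i0 = 0"
    then have "u = (?f ^^ j0) v" using ij by simp
    moreover have "j0 \<noteq> 0" using calculation uv(1) by (cases j0) auto
    ultimately have "u > k" using big[OF uv(3)] by simp
    then show False using uv(2) unfolding cover_def by simp
  qed
  have j0: "j0 \<noteq> 0"
  proof
    assume "j0 = 0"
    then have "v = (?f ^^ i0) u" using ij by simp
    then have "v > k" using big[OF uv(2)] i0 by simp
    then show False using uv(3) unfolding cover_def by simp
  qed
  obtain i1 where i1: "i0 = Suc i1" using i0 by (cases i0) auto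
  obtain j1 where j1: "j0 = Suc j1" using j0 by (cases j0) auto
  have ne: "(?f ^^ i1) u \<noteq> (?f ^^ j1) v"
  proof
    assume "(?f ^^ i1) u = (?f ^^ j1) v"
    then have "?P i1" by blast
    then have "i0 \<le> i1" unfolding i0_def by (rule Least_le)
    then show False using i1 by simp
  qed
  show ?thesis
    by (rule exI[of _ "(?f ^^ i1) u"], rule exI[of _ "(?f ^^ j1) v"])
       (use ne ij i1 j1 succ_iter[OF su] succ_iter[OF sv] in simp)
qed




lemma iter_meas:
  assumes b: "\<And>n. b n \<in> measurable N (count_space UNIV)"
  shows "(\<lambda>x. (succ_map (\<lambda>n. b n x) ^^ j) m) \<in> measurable N (count_space UNIV)"
proof (induction j)
  case 0 then show ?case by simp
next
  case (Suc j)
  have h: "\<And>i. (\<lambda>x. i + int (b i x)) \<in> measurable N (count_space UNIV)"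
    using measurable_compose[OF b measurable_count_space] by (auto intro: measurable_compose[OF b])
  have "(\<lambda>x. (\<lambda>i x. i + int (b i x)) ((succ_map (\<lambda>n. b n x) ^^ j) m) x) \<in> measurable N (count_space UNIV)"
    by (rule measurable_compose_countable[OF h Suc.IH])
  moreover have "\<And>x. (succ_map (\<lambda>n. b n x) ^^ Suc j) m = (\<lambda>i x. i + int (b i x)) ((succ_map (\<lambda>n. b n x) ^^ j) m) x"
    by (simp only: funpow.simps comp_apply) (rule succ_map_def)
  ultimately show ?case by simp
qed

lemma succ_sets:
  assumes b: "\<And>n. b n \<in> measurable N (count_space UNIV)"
    and pos: "\<And>n x. x \<in> space N \<Longrightarrow> b n x \<ge> 1"
  shows "{x \<in> space N. successful (succ_map (\<lambda>n. b n x)) k} \<in> sets N"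
proof -
  have "{x \<in> space N. successful (succ_map (\<lambda>n. b n x)) k} =
        {x \<in> space N. \<forall>K::nat. \<exists>m::int. m \<le> k - int K \<and> (\<exists>j. (succ_map (\<lambda>n. b n x) ^^ j) m = k)}"
    using successful_iff_unbounded[where A="\<lambda>n. b n _"] pos by auto
  also have "\<dots> \<in> sets N"
  proof -
    have "Measurable.pred N (\<lambda>x. \<forall>K::nat. \<exists>m::int. m \<le> k - int K \<and> (\<exists>j. (succ_map (\<lambda>n. b n x) ^^ j) m = k))"
      apply (rule pred_intros_countable(1))
      apply (rule pred_intros_countable(2))
      apply (rule pred_intros_logic(3))
       apply (rule measurable_const, simp)
      apply (rule pred_intros_countable(2))
      apply (rule pred_count_space_const1)
      apply (rule iter_meas[OF b])
      done
    then show ?thesis unfolding pred_def .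
  qed
  finally show ?thesis .
qed

lemma suminf_indicator_finite:
  assumes "(\<Sum>j. indicator X j :: ennreal) \<noteq> \<infinity>"
  shows "finite X"
proof (rule ccontr)
  assume inf: "infinite X"
  have "(\<Sum>j. indicator X j :: ennreal) < top" using assms by (simp add: top.not_eq_extremum)
  then obtain n where n: "(\<Sum>j. indicator X j :: ennreal) < of_nat n" using ennreal_Ex_less_of_nat by blast
  obtain F where F: "F \<subseteq> X" "finite F" "card F = n" using infinite_arbitrarily_large[OF inf] by blast
  have "(\<Sum>j\<in>F. indicator X j :: ennreal) = (\<Sum>j\<in>F. 1)"
    using F(1) by (intro sum.cong) (auto simp: indicator_def)
  then have e: "(\<Sum>j\<in>F. indicator X j :: ennreal) = of_nat n" using F by simp
  have "(\<Sum>j\<in>F. indicator X j :: ennreal) \<le> (\<Sum>j. indicator X j)"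
    by (rule sum_le_suminf) (auto simp: F)
  then show False using n e by simp
qed

lemma of_nat_suminf_ennreal: "(of_nat n :: ennreal) = (\<Sum>j. indicator {j. j < n} j)"
proof -
  have "(\<Sum>j. indicator {j. j < n} j :: ennreal) = (\<Sum>j\<in>{..<n}. indicator {j. j < n} j)"
    by (rule suminf_finite) auto
  also have "\<dots> = of_nat n" by simp
  finally show ?thesis by simp
qed




lemma run_ones:
  assumes "\<And>i. lo \<le> i \<Longrightarrow> i < lo + int d \<Longrightarrow> A i = 1"
  shows "(succ_map A ^^ d) lo = lo + int d"
  using assms
proof (induction d)
  case (Suc d)
  then have "(succ_map A ^^ d) lo = lo + int d" by simp
  then have e1: "(succ_map A ^^ Suc d) lo = succ_map A (lo + int d)" by simp
  have "A (lo + int d) = 1" using Suc.prems by simp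
  then have "succ_map A (lo + int d) = lo + int (Suc d)" by (simp add: succ_map_def)
  then show ?case using e1 by simp
qed simp

locale setting = prob_space M for M :: "'w measure" +
  fixes \<theta> :: "int \<Rightarrow> 'w \<Rightarrow> 'w" and a :: "int \<Rightarrow> 'w \<Rightarrow> nat"
  assumes flow_meas: "\<And>n. \<theta> n \<in> measurable M M"
    and flow_pres: "\<And>n. distr M M (\<theta> n) = M"
    and flow_add: "\<And>m n w. w \<in> space M \<Longrightarrow> \<theta> (m + n) w = \<theta> m (\<theta> n w)"
    and a_meas: "\<And>n. a n \<in> measurable M (count_space UNIV)"
    and a_compat: "\<And>n w. w \<in> space M \<Longrightarrow> a n w = a 0 (\<theta> n w)"
    and a_indep: "indep_vars (\<lambda>_. count_space UNIV) a UNIV"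
    and a_ident: "\<And>n. distr M (count_space UNIV) (a n) = distr M (count_space UNIV) (a 0)"
    and a_pos: "\<And>n w. w \<in> space M \<Longrightarrow> a n w \<ge> 1"
    and a_int: "integrable M (\<lambda>w. real (a 0 w))"
    and a_one: "measure M {w \<in> space M. a 0 w = 1} > 0"
begin

abbreviation S :: "'w \<Rightarrow> int \<Rightarrow> bool" where
  "S w n \<equiv> successful (succ_map (\<lambda>m. a m w)) n"

lemma a_shift: "w \<in> space M \<Longrightarrow> a n (\<theta> k w) = a (n + k) w"
proof -
  assume w: "w \<in> space M"
  have tk: "\<theta> k w \<in> space M" using measurable_space[OF flow_meas w] .
  have "a n (\<theta> k w) = a 0 (\<theta> n (\<theta> k w))" using a_compat[OF tk] .
  also have "\<dots> = a 0 (\<theta> (n + k) w)" using flow_add[OF w] by simp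
  also have "\<dots> = a (n + k) w" using a_compat[OF w] by simp
  finally show ?thesis .
qed

lemma a_shift_fun: "w \<in> space M \<Longrightarrow> (\<lambda>m. a m (\<theta> k w)) = (\<lambda>m. a (m + k) w)"
  using a_shift by auto

lemma S_shift: "w \<in> space M \<Longrightarrow> S (\<theta> k w) n \<longleftrightarrow> S w (n + k)"
  using a_shift_fun shift_successful by simp

lemma shift_set:
  assumes "B \<in> sets M"
  shows "emeasure M (\<theta> k -` B \<inter> space M) = emeasure M B"
proof -
  have "emeasure M B = emeasure (distr M M (\<theta> k)) B" using flow_pres by simp
  also have "\<dots> = emeasure M (\<theta> k -` B \<inter> space M)" using emeasure_distr[OF flow_meas assms] .
  finally show ?thesis by simp
qed

lemma pos_fun: "w \<in> space M \<Longrightarrow> \<forall>n. a n w \<ge> 1"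
  using a_pos by auto

lemma S_sets: "{w \<in> space M. S w n} \<in> sets M"
  by (rule succ_sets[OF a_meas a_pos])

lemma a_pred: "Measurable.pred M (\<lambda>w. P (a n w))"
  by (rule measurable_compose[OF a_meas]) simp

definition Ev :: "int \<Rightarrow> 'w set set" where
  "Ev i = {a i -` A \<inter> space M | A. A \<in> sets (count_space (UNIV::nat set))}"

definition MI :: "int set \<Rightarrow> 'w measure" where
  "MI I = sigma (space M) (\<Union>i\<in>I. Ev i)"

lemma Ev_sub: "(\<Union>i\<in>I. Ev i) \<subseteq> Pow (space M)"
  unfolding Ev_def by auto

lemma space_MI[simp]: "space (MI I) = space M"
  unfolding MI_def using Ev_sub by (simp add: space_measure_of_conv)

lemma sets_MI: "sets (MI I) = sigma_sets (space M) (\<Union>i\<in>I. Ev i)"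
  unfolding MI_def using Ev_sub by (simp add: sets_measure_of_conv)

lemma a_meas_MI: "i \<in> I \<Longrightarrow> a i \<in> measurable (MI I) (count_space UNIV)"
proof (rule measurableI)
  fix A :: "nat set" assume "i \<in> I" "A \<in> sets (count_space UNIV)"
  then have "a i -` A \<inter> space M \<in> (\<Union>i\<in>I. Ev i)" unfolding Ev_def by blast
  then show "a i -` A \<inter> space (MI I) \<in> sets (MI I)" unfolding sets_MI by auto
qed simp

lemma a_pred_MI: "i \<in> I \<Longrightarrow> Measurable.pred (MI I) (\<lambda>w. P (a i w))"
  by (rule measurable_compose[OF a_meas_MI]) simp_all

lemma S_MI:
  assumes "{..<n} \<subseteq> I"
  shows "{w \<in> space M. S w n} \<in> sets (MI I)"
proof -
  define b where "b m = (if m \<in> I then a m else (\<lambda>_. 1::nat))" for m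
  have bm: "b m \<in> measurable (MI I) (count_space UNIV)" for m
    unfolding b_def using a_meas_MI by auto
  have bp: "x \<in> space (MI I) \<Longrightarrow> b m x \<ge> 1" for x m unfolding b_def using a_pos by auto
  have "{w \<in> space (MI I). successful (succ_map (\<lambda>m. b m w)) n} \<in> sets (MI I)"
    by (rule succ_sets[OF bm bp])
  moreover have "{w \<in> space (MI I). successful (succ_map (\<lambda>m. b m w)) n} = {w \<in> space M. S w n}"
  proof -
    have "w \<in> space M \<Longrightarrow> successful (succ_map (\<lambda>m. b m w)) n \<longleftrightarrow> S w n" for w
      by (rule local_successful) (use bp a_pos assms in \<open>auto simp: b_def\<close>)
    then show ?thesis by auto
  qed
  ultimately show ?thesis by simp
qed

lemma MI_sub: "sets (MI I) \<subseteq> sets M"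
  unfolding sets_MI
proof (rule sets.sigma_sets_subset)
  show "(\<Union>i\<in>I. Ev i) \<subseteq> sets M" unfolding Ev_def using measurable_sets[OF a_meas] by blast
qed

lemma Ev_Int_stable: "Int_stable (Ev i)"
  unfolding Int_stable_def Ev_def
proof safe
  fix A B :: "nat set"
  show "\<exists>C. a i -` A \<inter> space M \<inter> (a i -` B \<inter> space M) = a i -` C \<inter> space M \<and> C \<in> sets (count_space UNIV)"
    by (intro exI[of _ "A \<inter> B"]) auto
qed

lemma indep_Ev: "indep_sets Ev UNIV"
  using a_indep unfolding indep_vars_def2 Ev_def by simp

lemma indep_two:
  assumes "I \<inter> J = {}" and E: "E \<in> sets (MI I)" and F: "F \<in> sets (MI J)"
  shows "prob (E \<inter> F) = prob E * prob F"
proof -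
  let ?K = "case_bool I J"
  have "indep_sets (\<lambda>j. sigma_sets (space M) (\<Union>i\<in>?K j. Ev i)) UNIV"
  proof (rule indep_sets_collect_sigma)
    show "indep_sets Ev (\<Union>j. ?K j)" by (rule indep_sets_mono_index[OF _ indep_Ev]) simp
    show "Int_stable (Ev i)" for i by (rule Ev_Int_stable)
    show "disjoint_family_on ?K UNIV" using assms(1) unfolding disjoint_family_on_def
      by (auto split: bool.splits)
  qed
  then have "indep_set (sets (MI I)) (sets (MI J))"
    unfolding indep_set_def sets_MI
    by (rule indep_sets_cong[THEN iffD1, rotated 2]) (auto split: bool.splits)
  then show ?thesis using E F by (rule indep_setD)
qed

lemma shift_eq:
  assumes "{w\<in>space M. P w} \<in> sets M" and "\<And>w. w \<in> space M \<Longrightarrow> P (\<theta> k w) = Q w"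
  shows "emeasure M {w\<in>space M. Q w} = emeasure M {w\<in>space M. P w}"
proof -
  have "\<theta> k -` {w\<in>space M. P w} \<inter> space M = {w\<in>space M. Q w}"
    using assms(2) measurable_space[OF flow_meas] by auto
  then show ?thesis using shift_set[OF assms(1), of k] by simp
qed

lemma a_sets: "{w\<in>space M. P (a n w)} \<in> sets M"
  using a_pred unfolding pred_def .

lemma a_dist: "emeasure M {w\<in>space M. P (a n w)} = emeasure M {w\<in>space M. P (a 0 w)}"
  by (rule shift_eq[where P="\<lambda>w. P (a 0 w)" and k=n and Q="\<lambda>w. P (a n w)", OF a_sets])
     (simp add: a_compat[symmetric])

lemma tail_sum: "(\<integral>\<^sup>+ w. of_nat (a 0 w) \<partial>M) = (\<Sum>j. emeasure M {w\<in>space M. j < a 0 w})"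
proof -
  have "(\<integral>\<^sup>+ w. of_nat (a 0 w) \<partial>M) = (\<integral>\<^sup>+ w. (\<Sum>j. indicator {w\<in>space M. j < a 0 w} w) \<partial>M)"
  proof (rule nn_integral_cong)
    fix w assume "w \<in> space M"
    then have "\<And>j. indicator {w\<in>space M. j < a 0 w} w = (indicator {j. j < a 0 w} j :: ennreal)"
      by (simp add: indicator_def)
    then show "(of_nat (a 0 w) :: ennreal) = (\<Sum>j. indicator {w\<in>space M. j < a 0 w} w)"
      using of_nat_suminf_ennreal by simp
  qed
  also have "\<dots> = (\<Sum>j. (\<integral>\<^sup>+ w. indicator {w\<in>space M. j < a 0 w} w \<partial>M))"
    by (rule nn_integral_suminf) (use a_sets in simp)
  also have "\<dots> = (\<Sum>j. emeasure M {w\<in>space M. j < a 0 w})"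
    using a_sets by simp
  finally show ?thesis .
qed

lemma Ea_eq: "(\<integral>\<^sup>+ w. of_nat (a 0 w) \<partial>M) = ennreal (\<integral>w. real (a 0 w) \<partial>M)"
proof -
  have "(\<integral>\<^sup>+ w. ennreal (real (a 0 w)) \<partial>M) = ennreal (\<integral>w. real (a 0 w) \<partial>M)"
    by (rule nn_integral_eq_integral[OF a_int]) simp
  then show ?thesis by (simp add: ennreal_of_nat_eq_real_of_nat)
qed

lemma cover_fin_AE: "AE w in M. finite (cover (\<lambda>m. a m w) 0)"
proof -
  define cnt where "cnt w = (\<Sum>j. indicator {w\<in>space M. j < a (- int j) w} w :: ennreal)" for w
  have cm: "cnt \<in> borel_measurable M" unfolding cnt_def
    by (intro borel_measurable_suminf_order borel_measurable_indicator a_sets)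
  have "(\<integral>\<^sup>+ w. cnt w \<partial>M) = (\<Sum>j. (\<integral>\<^sup>+ w. indicator {w\<in>space M. j < a (- int j) w} w \<partial>M))"
    unfolding cnt_def by (rule nn_integral_suminf) (use a_sets in simp)
  also have "\<dots> = (\<Sum>j. emeasure M {w\<in>space M. j < a (- int j) w})"
    using a_sets by simp
  also have "\<dots> = (\<Sum>j. emeasure M {w\<in>space M. j < a 0 w})"
  proof -
    have "\<And>j. emeasure M {w\<in>space M. j < a (- int j) w} = emeasure M {w\<in>space M. j < a 0 w}"
      by (rule a_dist)
    then show ?thesis by simp
  qed
  also have "\<dots> = ennreal (\<integral>w. real (a 0 w) \<partial>M)" using tail_sum Ea_eq by simp
  finally have "(\<integral>\<^sup>+ w. cnt w \<partial>M) \<noteq> \<infinity>" by simp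
  then have "AE w in M. cnt w \<noteq> \<infinity>" by (rule nn_integral_PInf_AE[OF cm])
  then show ?thesis
  proof (rule AE_mp, intro AE_I2 impI)
    fix w assume w: "w \<in> space M" and c: "cnt w \<noteq> \<infinity>"
    have "cnt w = (\<Sum>j. indicator {j. j < a (- int j) w} j)" unfolding cnt_def using w by (simp add: indicator_def)
    then have fin: "finite {j. j < a (- int j) w}" using c suminf_indicator_finite by simp
    have "cover (\<lambda>m. a m w) 0 \<subseteq> (\<lambda>j. - int j) ` {j. j < a (- int j) w}"
    proof
      fix n assume "n \<in> cover (\<lambda>m. a m w) 0"
      then have n: "n \<le> 0" "0 < n + int (a n w)" unfolding cover_def succ_map_def by auto
      then have "n = - int (nat (- n))" by simp
      moreover have "nat (- n) < a (- int (nat (- n))) w" using n by simp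
      ultimately show "n \<in> (\<lambda>j. - int j) ` {j. j < a (- int j) w}" by blast
    qed
    then show "finite (cover (\<lambda>m. a m w) 0)" using fin finite_subset by blast
  qed
qed

lemma S_pred: "Measurable.pred M (\<lambda>w. S w n)"
  by (simp add: pred_def S_sets)

lemma Sa_sets: "{w\<in>space M. S w n \<and> P (a m w)} \<in> sets M"
proof -
  have "Measurable.pred M (\<lambda>w. S w n \<and> P (a m w))"
    by (intro pred_intros_logic(3) S_pred a_pred)
  then show ?thesis unfolding pred_def .
qed

definition pre :: "nat \<Rightarrow> 'w set" where
  "pre j = {w\<in>space M. S w (- int j) \<and> a (- int j) w = Suc j}"

definition Lam :: ennreal where "Lam = emeasure M {w\<in>space M. S w 0}"

definition Q :: "'w \<Rightarrow> int \<Rightarrow> bool" where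
  "Q w z \<longleftrightarrow> (\<exists>u v. u \<noteq> v \<and> S w u \<and> S w v \<and> u + int (a u w) = z \<and> v + int (a v w) = z)"

lemma pre_sets: "pre j \<in> sets M"
  unfolding pre_def by (rule Sa_sets)

lemma Lam_fin: "Lam \<noteq> \<infinity>"
  unfolding Lam_def using S_sets emeasure_eq_measure by simp

lemma shift_Sa:
  "emeasure M {w\<in>space M. S w k \<and> P (a k w)} = emeasure M {w\<in>space M. S w 0 \<and> P (a 0 w)}"
proof (rule shift_eq[where P="\<lambda>w. S w 0 \<and> P (a 0 w)" and k=k, OF Sa_sets])
  fix w assume w: "w \<in> space M"
  have "S (\<theta> k w) 0 = S w k" using S_shift[OF w, of k 0] by simp
  moreover have "a 0 (\<theta> k w) = a k w" using a_shift[OF w, of 0 k] by simp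
  ultimately show "(S (\<theta> k w) 0 \<and> P (a 0 (\<theta> k w))) = (S w k \<and> P (a k w))" by simp
qed

lemma P1_int: "(\<integral>\<^sup>+ w. (\<Sum>j. indicator (pre j) w) \<partial>M) = Lam"
proof -
  have "(\<integral>\<^sup>+ w. (\<Sum>j. indicator (pre j) w) \<partial>M) = (\<Sum>j. (\<integral>\<^sup>+ w. indicator (pre j) w \<partial>M))"
    by (rule nn_integral_suminf) (use pre_sets in simp)
  also have "\<dots> = (\<Sum>j. emeasure M (pre j))" using pre_sets by simp
  also have "\<dots> = (\<Sum>j. emeasure M {w\<in>space M. S w 0 \<and> a 0 w = Suc j})"
  proof -
    have "\<And>j. emeasure M {w\<in>space M. S w (- int j) \<and> a (- int j) w = Suc j} =
                emeasure M {w\<in>space M. S w 0 \<and> a 0 w = Suc j}"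
      by (rule shift_Sa)
    then show ?thesis unfolding pre_def by simp
  qed
  also have "\<dots> = emeasure M (\<Union>j. {w\<in>space M. S w 0 \<and> a 0 w = Suc j})"
    by (rule suminf_emeasure) (auto simp: disjoint_family_on_def intro: Sa_sets)
  also have "(\<Union>j. {w\<in>space M. S w 0 \<and> a 0 w = Suc j}) = {w\<in>space M. S w 0}"
  proof (intro equalityI subsetI)
    fix w assume "w \<in> {w\<in>space M. S w 0}"
    moreover then have "a 0 w = Suc (a 0 w - 1)" using a_pos[of w 0] by simp
    ultimately show "w \<in> (\<Union>j. {w\<in>space M. S w 0 \<and> a 0 w = Suc j})" by blast
  qed auto
  finally show ?thesis unfolding Lam_def .
qed

lemma S1_iff:
  assumes w: "w \<in> space M" and fin: "finite (cover (\<lambda>m. a m w) 0)"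
  shows "S w 1 \<longleftrightarrow> (\<exists>j. w \<in> pre j)"
proof
  assume "S w 1"
  then obtain u where u: "succ_map (\<lambda>m. a m w) u = 0 + 1" "S w u"
    using successful_preimage[where A="\<lambda>m. a m w" and k=0, OF _ fin] pos_fun[OF w] by auto
  then have u1: "u + int (a u w) = 1" by (simp add: succ_map_def)
  moreover have "a u w \<ge> 1" using a_pos[OF w] .
  ultimately have "u \<le> 0" by simp
  then have "u = - int (nat (- u))" by simp
  moreover have "a (- int (nat (- u))) w = Suc (nat (- u))" using u1 \<open>u \<le> 0\<close> by simp
  ultimately have "w \<in> pre (nat (- u))" unfolding pre_def using w u(2) by (metis (mono_tags, lifting) mem_Collect_eq)
  then show "\<exists>j. w \<in> pre j" by blast
next
  assume "\<exists>j. w \<in> pre j"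
  then obtain j where j: "S w (- int j)" "a (- int j) w = Suc j" unfolding pre_def by auto
  have "succ_map (\<lambda>m. a m w) (- int j) = 1" using j(2) by (simp add: succ_map_def)
  then show "S w 1" using succ_step[OF j(1)] by simp
qed

lemma pre_ex_sets: "{w\<in>space M. \<exists>j. w \<in> pre j} \<in> sets M"
proof -
  have "{w\<in>space M. \<exists>j. w \<in> pre j} = (\<Union>j. pre j)" unfolding pre_def by auto
  then show ?thesis using pre_sets by auto
qed

lemma Q1_null: "AE w in M. \<not> Q w 1"
proof -
  define P1 where "P1 w = (\<Sum>j. indicator (pre j) w :: ennreal)" for w
  define I1 where "I1 w = (indicator {w\<in>space M. \<exists>j. w \<in> pre j} w :: ennreal)" for w
  have P1m: "P1 \<in> borel_measurable M" unfolding P1_def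
    by (intro borel_measurable_suminf_order borel_measurable_indicator pre_sets)
  have I1m: "I1 \<in> borel_measurable M" unfolding I1_def
    by (intro borel_measurable_indicator pre_ex_sets)
  have "AE w in M. I1 w = indicator {w\<in>space M. S w 1} w"
    using cover_fin_AE by (rule AE_mp) (auto intro!: AE_I2 simp: I1_def S1_iff indicator_def)
  then have "(\<integral>\<^sup>+ w. I1 w \<partial>M) = (\<integral>\<^sup>+ w. indicator {w\<in>space M. S w 1} w \<partial>M)"
    by (rule nn_integral_cong_AE)
  also have "\<dots> = emeasure M {w\<in>space M. S w 1}" using S_sets by simp
  also have "\<dots> = Lam" unfolding Lam_def
    by (rule shift_eq[where P="\<lambda>w. S w 0" and k=1, OF S_sets]) (simp add: S_shift)
  finally have I1i: "(\<integral>\<^sup>+ w. I1 w \<partial>M) = Lam" .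
  have le: "I1 w \<le> P1 w" for w
  proof (cases "\<exists>j. w \<in> pre j")
    case True
    then obtain j where j: "w \<in> pre j" by blast
    have "(\<Sum>i\<in>{j}. indicator (pre i) w :: ennreal) \<le> P1 w"
      unfolding P1_def by (rule sum_le_suminf) auto
    then show ?thesis using j unfolding I1_def pre_def by (simp add: indicator_def)
  qed (simp add: I1_def indicator_def)
  have "(\<integral>\<^sup>+ w. P1 w - I1 w \<partial>M) = (\<integral>\<^sup>+ w. P1 w \<partial>M) - (\<integral>\<^sup>+ w. I1 w \<partial>M)"
    by (rule nn_integral_diff[OF P1m I1m]) (use I1i Lam_fin le in auto)
  also have "\<dots> = 0" using I1i P1_int Lam_fin unfolding P1_def by simp
  finally have "AE w in M. P1 w - I1 w = 0"
    using nn_integral_0_iff_AE[of "\<lambda>w. P1 w - I1 w"] P1m I1m by auto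
  then show ?thesis
  proof (rule AE_mp, intro AE_I2 impI notI)
    fix w assume w: "w \<in> space M" and d: "P1 w - I1 w = 0" and q: "Q w 1"
    have "P1 w \<le> I1 w" using d by (rule ennreal_minus_eq_0)
    also have "I1 w \<le> 1" unfolding I1_def by (simp add: indicator_def)
    finally have p1: "P1 w \<le> 1" .
    obtain u v where uv: "u \<noteq> v" "S w u" "S w v" "u + int (a u w) = 1" "v + int (a v w) = 1"
      using q unfolding Q_def by blast
    have "u \<le> 0" "v \<le> 0" using uv(4,5) a_pos[OF w, of u] a_pos[OF w, of v] by auto
    then have ue: "u = - int (nat (- u))" and ve: "v = - int (nat (- v))" by simp_all
    have "int (a u w) = int (Suc (nat (- u)))" using uv(4) \<open>u \<le> 0\<close> by simp
    then have au: "a u w = Suc (nat (- u))" by (simp only: of_nat_eq_iff)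
    have "int (a v w) = int (Suc (nat (- v)))" using uv(5) \<open>v \<le> 0\<close> by simp
    then have av: "a v w = Suc (nat (- v))" by (simp only: of_nat_eq_iff)
    have "w \<in> pre (nat (- u))" unfolding pre_def using w uv(2) au ue[symmetric] by simp
    moreover have "w \<in> pre (nat (- v))" unfolding pre_def using w uv(3) av ve[symmetric] by simp
    moreover have ne: "nat (- u) \<noteq> nat (- v)" using uv(1) \<open>u \<le> 0\<close> \<open>v \<le> 0\<close> by simp
    moreover have "(\<Sum>i\<in>{nat (- u), nat (- v)}. indicator (pre i) w :: ennreal) \<le> P1 w"
      unfolding P1_def by (rule sum_le_suminf) auto
    ultimately have "2 \<le> P1 w" using ne by (simp add: indicator_def)
    then have "(2::ennreal) \<le> 1" using p1 by (rule order_trans)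
    then show False by simp
  qed
qed

end




context setting
begin

lemma Q_sets: "{w\<in>space M. Q w z} \<in> sets M"
proof -
  have "Measurable.pred M (\<lambda>w. \<exists>u v. u \<noteq> v \<and> S w u \<and> S w v \<and> u + int (a u w) = z \<and> v + int (a v w) = z)"
    apply (rule pred_intros_countable(2))+
    apply (rule pred_intros_logic(3), rule measurable_const, simp)
    apply (rule pred_intros_logic(3), rule S_pred)
    apply (rule pred_intros_logic(3), rule S_pred)
    apply (rule pred_intros_logic(3))
     apply (rule a_pred[where P="\<lambda>x. _ + int x = z"])
    apply (rule a_pred[where P="\<lambda>x. _ + int x = z"])
    done
  then show ?thesis unfolding pred_def Q_def .
qed

lemma Q_shift: "w \<in> space M \<Longrightarrow> Q (\<theta> k w) 1 \<longleftrightarrow> Q w (1 + k)"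
proof -
  assume w: "w \<in> space M"
  have Sx: "\<And>u. S (\<theta> k w) u = S w (u + k)" using S_shift[OF w] .
  have ax: "\<And>u. a u (\<theta> k w) = a (u + k) w" using a_shift[OF w] .
  show ?thesis
  proof
    assume "Q (\<theta> k w) 1"
    then obtain u v where uv: "u \<noteq> v" "S (\<theta> k w) u" "S (\<theta> k w) v"
      "u + int (a u (\<theta> k w)) = 1" "v + int (a v (\<theta> k w)) = 1"
      unfolding Q_def by blast
    have "u + k \<noteq> v + k" using uv(1) by simp
    moreover have "S w (u + k)" "S w (v + k)" using uv(2,3) Sx by simp_all
    moreover have "(u + k) + int (a (u + k) w) = 1 + k" "(v + k) + int (a (v + k) w) = 1 + k"
      using uv(4,5) ax by simp_all
    ultimately show "Q w (1 + k)" unfolding Q_def by blast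
  next
    assume "Q w (1 + k)"
    then obtain u v where uv: "u \<noteq> v" "S w u" "S w v" "u + int (a u w) = 1 + k" "v + int (a v w) = 1 + k"
      unfolding Q_def by blast
    have "u - k \<noteq> v - k" using uv(1) by simp
    moreover have "S (\<theta> k w) (u - k)" "S (\<theta> k w) (v - k)" using uv(2,3) Sx by simp_all
    moreover have "(u - k) + int (a (u - k) (\<theta> k w)) = 1" "(v - k) + int (a (v - k) (\<theta> k w)) = 1"
      using uv(4,5) ax by simp_all
    ultimately show "Q (\<theta> k w) 1" unfolding Q_def by blast
  qed
qed

lemma Q_null: "AE w in M. \<forall>z. \<not> Q w z"
proof -
  have ae: "(AE w in M. \<not> Q w z) \<longleftrightarrow> emeasure M {w\<in>space M. Q w z} = 0" for z
    by (rule AE_iff_measurable[OF Q_sets]) simp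
  have q1: "emeasure M {w\<in>space M. Q w 1} = 0"
    using Q1_null ae by simp
  have "AE w in M. \<not> Q w z" for z
  proof -
    have "emeasure M {w\<in>space M. Q w z} = emeasure M {w\<in>space M. Q w 1}"
      by (rule shift_eq[where P="\<lambda>w. Q w 1" and k="z - 1", OF Q_sets]) (simp add: Q_shift)
    then show ?thesis using q1 ae by simp
  qed
  then show ?thesis by (simp add: AE_all_countable)
qed

end




context setting
begin

lemma pred_MI_S: "{..<n} \<subseteq> I \<Longrightarrow> Measurable.pred (MI I) (\<lambda>w. S w n)"
  unfolding pred_def using S_MI by simp

lemma merge_Q:
  assumes w: "w \<in> space M" and nn: "n \<noteq> n'" "n \<le> 0" "n' \<le> 0" and xy: "0 < x" "0 < y"
    and s: "S w n" "S w n'" and fx: "n + int (a n w) = x" and fy: "n' + int (a n' w) = y"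
    and ones: "\<forall>i\<in>{min x y..<max x y}. a i w = 1"
  shows "\<exists>z. Q w z"
proof -
  let ?A = "\<lambda>m. a m w"
  let ?f = "succ_map ?A"
  have pos: "\<And>m. ?A m \<ge> 1" using a_pos[OF w] .
  have fn: "?f n = x" and fn': "?f n' = y" using fx fy by (simp_all add: succ_map_def)
  have cn: "n \<in> cover ?A 0" "n' \<in> cover ?A 0" using fn fn' nn xy unfolding cover_def by simp_all
  define d where "d = nat (max x y - min x y)"
  have run: "(?f ^^ d) (min x y) = max x y"
  proof -
    have md: "min x y + int d = max x y" by (simp add: d_def)
    have "(?f ^^ d) (min x y) = min x y + int d"
      by (rule run_ones) (use ones md in auto)
    then show ?thesis using md by simp
  qed
  have "\<exists>u' v'. u' \<noteq> v' \<and> S w u' \<and> S w v' \<and> ?f u' = ?f v'"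
  proof (cases "x \<le> y")
    case True
    have "(?f ^^ Suc d) n = (?f ^^ d) (?f n)" by (simp only: funpow_Suc_right comp_apply)
    also have "\<dots> = y" using run fn True by simp
    also have "\<dots> = (?f ^^ 1) n'" using fn' by simp
    finally show ?thesis by (rule merge[where A="?A", OF pos nn(1) cn s])
  next
    case False
    have "(?f ^^ 1) n = x" using fn by simp
    also have "\<dots> = (?f ^^ d) (?f n')" using run fn' False by simp
    also have "\<dots> = (?f ^^ Suc d) n'" by (simp only: funpow_Suc_right comp_apply)
    finally show ?thesis by (rule merge[where A="?A", OF pos nn(1) cn s])
  qed
  then obtain u' v' where "u' \<noteq> v'" "S w u'" "S w v'" "?f u' = ?f v'" by blast
  then have "Q w (?f u')" unfolding Q_def by (intro exI[of _ u'] exI[of _ v']) (simp add: succ_map_def)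
  then show ?thesis by blast
qed

lemma ones_prob_pos: "prob {w\<in>space M. \<forall>i\<in>{lo..<hi}. a i w = 1} > 0"
proof (cases "lo < hi")
  case False
  then have "{w\<in>space M. \<forall>i\<in>{lo..<hi}. a i w = 1} = space M" by auto
  then show ?thesis by (simp add: prob_space)
next
  case True
  define A where "A i = a i -` {1} \<inter> space M" for i
  have "{w\<in>space M. \<forall>i\<in>{lo..<hi}. a i w = 1} = (\<Inter>i\<in>{lo..<hi}. A i)"
    using True unfolding A_def by auto
  moreover have "prob (\<Inter>i\<in>{lo..<hi}. A i) = (\<Prod>i\<in>{lo..<hi}. prob (A i))"
    by (rule indep_setsD[OF indep_Ev]) (use True in \<open>auto simp: A_def Ev_def\<close>)
  moreover have "prob (A i) > 0" for i
  proof -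
    have "A i = {w\<in>space M. a i w = 1}" unfolding A_def by auto
    then have "prob (A i) = prob {w\<in>space M. a 0 w = 1}"
      unfolding measure_def using a_dist[of "\<lambda>x. x = 1" i] by simp
    then show ?thesis using a_one by simp
  qed
  ultimately show ?thesis by (simp add: prod_pos)
qed

lemma E_null:
  assumes nn: "n \<noteq> n'" "n \<le> 0" "n' \<le> 0" and xy: "0 < x" "0 < y"
  shows "emeasure M {w\<in>space M. S w n \<and> S w n' \<and> n + int (a n w) = x \<and> n' + int (a n' w) = y} = 0"
proof -
  define E where "E = {w\<in>space M. S w n \<and> S w n' \<and> n + int (a n w) = x \<and> n' + int (a n' w) = y}"
  define F where "F = {w\<in>space M. \<forall>i\<in>{min x y..<max x y}. a i w = 1}"
  have "Measurable.pred (MI {..0}) (\<lambda>w. S w n \<and> S w n' \<and> n + int (a n w) = x \<and> n' + int (a n' w) = y)"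
    apply (rule pred_intros_logic(3), rule pred_MI_S, use nn in auto)
    apply (rule pred_intros_logic(3), rule pred_MI_S, use nn in auto)
    apply (rule pred_intros_logic(3))
     apply (rule a_pred_MI[where P="\<lambda>z. n + int z = x"], use nn in simp)
    apply (rule a_pred_MI[where P="\<lambda>z. n' + int z = y"], use nn in simp)
    done
  then have EM: "E \<in> sets (MI {..0})" unfolding E_def pred_def by simp
  have "Measurable.pred (MI {1..}) (\<lambda>w. \<forall>i\<in>{min x y..<max x y}. a i w = 1)"
    apply (rule pred_intros_countable_bounded(3))
    apply (rule a_pred_MI[where P="\<lambda>z. z = 1"])
    using xy by auto
  then have FM: "F \<in> sets (MI {1..})" unfolding F_def pred_def by simp
  have ind: "prob (E \<inter> F) = prob E * prob F"
    by (rule indep_two[OF _ EM FM]) auto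
  have Fp: "prob F > 0" unfolding F_def by (rule ones_prob_pos)
  have Es: "E \<in> sets M" and Fs: "F \<in> sets M" using EM FM MI_sub by auto
  have "AE w in M. w \<notin> E \<inter> F"
    using Q_null
  proof (rule AE_mp, intro AE_I2 impI notI)
    fix w assume "w \<in> space M" "\<forall>z. \<not> Q w z" "w \<in> E \<inter> F"
    then show False using merge_Q[OF _ nn xy] unfolding E_def F_def by blast
  qed
  then have "emeasure M (E \<inter> F) = 0"
    by (subst (asm) AE_iff_measurable[OF sets.Int[OF Es Fs]]) (use Es Fs sets.sets_into_space in auto)
  then have "prob (E \<inter> F) = 0" by (simp add: measure_def)
  then have "prob E = 0" using ind Fp by simp
  then show ?thesis unfolding E_def[symmetric] using Es by (simp add: emeasure_eq_measure)
qed

lemma uniq_AE: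
  "AE w in M. \<forall>n n'. n \<in> cover (\<lambda>m. a m w) 0 \<and> n' \<in> cover (\<lambda>m. a m w) 0 \<and> S w n \<and> S w n' \<longrightarrow> n = n'"
proof (rule AE_I')
  let ?Idx = "{(n, n', x, y). n \<noteq> n' \<and> n \<le> 0 \<and> n' \<le> (0::int) \<and> 0 < (x::int) \<and> 0 < (y::int)}"
  let ?E = "\<lambda>(n, n', x, y). {w\<in>space M. S w n \<and> S w n' \<and> n + int (a n w) = x \<and> n' + int (a n' w) = y}"
  show "(\<Union>i\<in>?Idx. ?E i) \<in> null_sets M"
  proof (rule null_sets_UN')
    show "countable ?Idx" by (rule countable_subset[OF subset_UNIV]) (rule countableI_type)
    fix i assume "i \<in> ?Idx"
    then obtain n n' x y where i: "i = (n, n', x, y)" "n \<noteq> n'" "n \<le> 0" "n' \<le> 0" "0 < x" "0 < y" by auto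
    have "?E i \<in> sets M" unfolding i(1) by (auto intro!: sets.sets_Collect_conj S_sets a_sets)
    then show "?E i \<in> null_sets M" using E_null[OF i(2-6)] i(1) by auto
  qed
  show "{w\<in>space M. \<not> (\<forall>n n'. n \<in> cover (\<lambda>m. a m w) 0 \<and> n' \<in> cover (\<lambda>m. a m w) 0 \<and> S w n \<and> S w n' \<longrightarrow> n = n')}
        \<subseteq> (\<Union>i\<in>?Idx. ?E i)"
  proof
    fix w assume "w \<in> {w\<in>space M. \<not> (\<forall>n n'. n \<in> cover (\<lambda>m. a m w) 0 \<and> n' \<in> cover (\<lambda>m. a m w) 0 \<and> S w n \<and> S w n' \<longrightarrow> n = n')}"
    then obtain n n' where w: "w \<in> space M" "n \<in> cover (\<lambda>m. a m w) 0" "n' \<in> cover (\<lambda>m. a m w) 0"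
      "S w n" "S w n'" "n \<noteq> n'" by blast
    then have "(n, n', n + int (a n w), n' + int (a n' w)) \<in> ?Idx"
      unfolding cover_def succ_map_def by auto
    moreover have "w \<in> ?E (n, n', n + int (a n w), n' + int (a n' w))" using w by auto
    ultimately show "w \<in> (\<Union>i\<in>?Idx. ?E i)" by blast
  qed
qed

lemma one_AE: "AE w in M. (\<Sum>j. indicator {w\<in>space M. S w (- int j) \<and> j < a (- int j) w} w) = (1::ennreal)"
  using cover_fin_AE uniq_AE
proof (rule AE_mp[OF AE_conjI], intro AE_I2 impI)
  fix w assume w: "w \<in> space M" and h: "finite (cover (\<lambda>m. a m w) 0) \<and>
    (\<forall>n n'. n \<in> cover (\<lambda>m. a m w) 0 \<and> n' \<in> cover (\<lambda>m. a m w) 0 \<and> S w n \<and> S w n' \<longrightarrow> n = n')"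
  have pos: "\<And>m. a m w \<ge> 1" using a_pos[OF w] .
  obtain n where n: "n \<in> cover (\<lambda>m. a m w) 0" "S w n"
    using cover_exists[where A="\<lambda>m. a m w", OF pos] h by blast
  have cv: "- int j \<in> cover (\<lambda>m. a m w) 0 \<longleftrightarrow> j < a (- int j) w" for j
    unfolding cover_def succ_map_def by auto
  have n0: "n \<le> 0" using n(1) unfolding cover_def by simp
  define j0 where "j0 = nat (- n)"
  have nj: "n = - int j0" unfolding j0_def using n0 by simp
  have ind: "indicator {w\<in>space M. S w (- int j) \<and> j < a (- int j) w} w = (if j = j0 then 1 else (0::ennreal))" for j
  proof (cases "j = j0")
    case True then show ?thesis using n nj w cv by (simp add: indicator_def)
  next
    case False
    have "\<not> (S w (- int j) \<and> j < a (- int j) w)"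
    proof
      assume "S w (- int j) \<and> j < a (- int j) w"
      then have "- int j = n" using h n cv by blast
      then show False using False nj by simp
    qed
    then show ?thesis using False by (simp add: indicator_def)
  qed
  show "(\<Sum>j. indicator {w\<in>space M. S w (- int j) \<and> j < a (- int j) w} w) = (1::ennreal)"
    unfolding ind by (subst suminf_finite[of "{j0}"]) auto
qed

lemma Lam_E: "Lam * ennreal (\<integral>w. real (a 0 w) \<partial>M) = 1"
proof -
  define B where "B j = {w\<in>space M. S w (- int j) \<and> j < a (- int j) w}" for j
  have Bs: "B j \<in> sets M" for j unfolding B_def by (rule Sa_sets)
  have "1 = (\<integral>\<^sup>+ w. 1 \<partial>M)" by (simp add: emeasure_space_1)
  also have "\<dots> = (\<integral>\<^sup>+ w. (\<Sum>j. indicator (B j) w) \<partial>M)"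
    by (rule nn_integral_cong_AE) (use one_AE in \<open>auto simp: B_def elim: AE_mp\<close>)
  also have "\<dots> = (\<Sum>j. (\<integral>\<^sup>+ w. indicator (B j) w \<partial>M))"
    by (rule nn_integral_suminf) (use Bs in simp)
  also have "\<dots> = (\<Sum>j. emeasure M (B j))" using Bs by simp
  also have "\<dots> = (\<Sum>j. emeasure M {w\<in>space M. S w 0 \<and> j < a 0 w})"
  proof -
    have "\<And>j. emeasure M (B j) = emeasure M {w\<in>space M. S w 0 \<and> j < a 0 w}"
      unfolding B_def by (rule shift_Sa)
    then show ?thesis by simp
  qed
  also have "\<dots> = (\<Sum>j. Lam * emeasure M {w\<in>space M. j < a 0 w})"
  proof -
    have "emeasure M {w\<in>space M. S w 0 \<and> j < a 0 w} = Lam * emeasure M {w\<in>space M. j < a 0 w}" for j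
    proof -
      have e1: "{w\<in>space M. S w 0} \<in> sets (MI {..<0})" by (rule S_MI) simp
      have "Measurable.pred (MI {0}) (\<lambda>w. j < a 0 w)" by (rule a_pred_MI) simp
      then have e2: "{w\<in>space M. j < a 0 w} \<in> sets (MI {0})" unfolding pred_def by simp
      have "prob ({w\<in>space M. S w 0} \<inter> {w\<in>space M. j < a 0 w}) =
            prob {w\<in>space M. S w 0} * prob {w\<in>space M. j < a 0 w}"
        by (rule indep_two[OF _ e1 e2]) auto
      moreover have "{w\<in>space M. S w 0} \<inter> {w\<in>space M. j < a 0 w} = {w\<in>space M. S w 0 \<and> j < a 0 w}" by auto
      ultimately show ?thesis unfolding Lam_def
        by (simp add: emeasure_eq_measure ennreal_mult)
    qed
    then show ?thesis by simp
  qed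
  also have "\<dots> = Lam * (\<integral>\<^sup>+ w. of_nat (a 0 w) \<partial>M)" by (simp add: tail_sum)
  also have "\<dots> = Lam * ennreal (\<integral>w. real (a 0 w) \<partial>M)" by (simp add: Ea_eq)
  finally show ?thesis by simp
qed

lemma final:
  "measure M {w \<in> space M. S w 0} = 1 / (\<integral>w. real (a 0 w) \<partial>M)"
proof -
  let ?E = "\<integral>w. real (a 0 w) \<partial>M"
  have E0: "?E \<ge> 0" by (rule integral_nonneg_AE) simp
  have "Lam = ennreal (measure M {w \<in> space M. S w 0})" unfolding Lam_def using S_sets by (simp add: emeasure_eq_measure)
  then have "ennreal (measure M {w \<in> space M. S w 0} * ?E) = 1" using Lam_E E0 by (simp add: ennreal_mult)
  then have "measure M {w \<in> space M. S w 0} * ?E = 1"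
    by (metis E0 ennreal_1 ennreal_inj measure_nonneg mult_nonneg_nonneg zero_le_one)
  moreover have "?E \<noteq> 0" using calculation by auto
  ultimately show ?thesis by (simp add: eq_divide_eq)
qed

end


theorem mainTheorem8:
  fixes M :: "'w measure" and \<theta> :: "int \<Rightarrow> 'w \<Rightarrow> 'w" and a :: "int \<Rightarrow> 'w \<Rightarrow> nat"
  assumes "prob_space M"
    and flow_meas: "\<And>n. \<theta> n \<in> measurable M M"
    and flow_pres: "\<And>n. distr M M (\<theta> n) = M"
    and flow_zero: "\<And>w. w \<in> space M \<Longrightarrow> \<theta> 0 w = w"
    and flow_add: "\<And>m n w. w \<in> space M \<Longrightarrow> \<theta> (m + n) w = \<theta> m (\<theta> n w)"
    and a_meas: "\<And>n. a n \<in> measurable M (count_space UNIV)"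
    and a_compat: "\<And>n w. w \<in> space M \<Longrightarrow> a n w = a 0 (\<theta> n w)"
    and a_indep: "prob_space.indep_vars M (\<lambda>_. count_space UNIV) a UNIV"
    and a_ident: "\<And>n. distr M (count_space UNIV) (a n) = distr M (count_space UNIV) (a 0)"
    and a_pos: "\<And>n w. w \<in> space M \<Longrightarrow> a n w \<ge> 1"
    and a_int: "integrable M (\<lambda>w. real (a 0 w))"
    and a_one: "measure M {w \<in> space M. a 0 w = 1} > 0"
  shows "measure M {w \<in> space M. successful (succ_map (\<lambda>n. a n w)) 0}
           = 1 / (\<integral>w. real (a 0 w) \<partial>M)
       \<and> measure M {w \<in> space M. ephemeral (succ_map (\<lambda>n. a n w)) 0}
           = 1 - 1 / (\<integral>w. real (a 0 w) \<partial>M)"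
proof -
  interpret setting M \<theta> a
    by (rule setting.intro[OF assms(1)], unfold_locales) (use assms in auto)
  have s: "measure M {w \<in> space M. successful (succ_map (\<lambda>n. a n w)) 0} = 1 / (\<integral>w. real (a 0 w) \<partial>M)"
    by (rule final)
  have "{w \<in> space M. ephemeral (succ_map (\<lambda>n. a n w)) 0} = space M - {w \<in> space M. successful (succ_map (\<lambda>n. a n w)) 0}"
    unfolding ephemeral_def successful_def by auto
  then have "measure M {w \<in> space M. ephemeral (succ_map (\<lambda>n. a n w)) 0} = 1 - measure M {w \<in> space M. successful (succ_map (\<lambda>n. a n w)) 0}"
    using prob_compl[OF S_sets] by simp
  then show ?thesis using s by simp
qed

end
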